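(* In the random execution model of the context, let $T_{\max}(t)=\max_iT_i(t)$ be the time at which the last node finishes iteration $t$. Then for all $\nu>0$ and all $t$, $$\mathbb{P}\big(T_{\max}(t)\ge\nu t\big)\le\sum_{w\ge\nu t}\sum_{i=1}^n\mathbb{E}\big[X^t(i,w)\big].$$
   Context: There are $n$ nodes and a communication graph. At each iteration $t$, independently, either a communication edge $(i,j)$ is activated (with probability $p_{ij}$) or a node $i$ performs a local computation (with probability $p_i^{\rm comp}$). Activating $(i,j)$ at iteration $t$ takes a random time $\tau_c^{ij}(t)$ and a local computation at $i$ takes a random time $\tau_l^i(t)$; these are positive-integer-valued. Completion times: $T_i(0)=0$; if $(k,\ell)$ is activated at iteration $t$, $T_k(t+1)=T_\ell(t+1)=\max(T_k(t),T_\ell(t))+\tau_c^{k\ell}(t)$; if $k$ computes, $T_k(t+1)=T_k(t)+\tau_l^k(t)$; other $T_i$ unchanged. Integer variables $X^t(i,w)$, $w\in\mathbb{N}$ (with $X^t(i,w)=0$ for $w<0$): $X^0(i,0)=1$ and $X^0(i,w)=0$ for $w\ne0$. If $(i,j)$ is activated at iteration $t$, then for all $w$, $X^{t+1}(i,w)=X^{t+1}(j,w)=X^t(i,w-\tau_c^{ij}(t))+X^t(j,w-\tau_c^{ij}(t))$; if node $i$ computes, $X^{t+1}(i,w+\tau_l^i(t))=X^t(i,w)$ for all $w\ge0$ and $X^{t+1}(i,w)=0$ for $w<\tau_l^i(t)$; all other $X^{t+1}(h,\cdot)=X^t(h,\cdot)$. *)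

theory Defs
  imports "HOL-Probability.Probability"
begin

datatype action = Comm nat nat | Comp nat

primrec Tc :: "(nat \<Rightarrow> action) \<Rightarrow> (nat \<Rightarrow> nat \<Rightarrow> nat \<Rightarrow> nat) \<Rightarrow> (nat \<Rightarrow> nat \<Rightarrow> nat)
               \<Rightarrow> nat \<Rightarrow> nat \<Rightarrow> nat" where
  "Tc a tc tcomp 0 = (\<lambda>i. 0)"
| "Tc a tc tcomp (Suc t) =
     (let T = Tc a tc tcomp t in
      (case a t of
         Comm k l \<Rightarrow> (\<lambda>i. if i = k \<or> i = l then max (T k) (T l) + tc t k l else T i)
       | Comp k \<Rightarrow> (\<lambda>i. if i = k then T k + tcomp t k else T i)))"

text \<open>The counting variables X t i w (for w \<ge> 0; values at negative w are 0 by convention,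
  which is encoded by the guard w \<ge> tau).\<close>
primrec Xc :: "(nat \<Rightarrow> action) \<Rightarrow> (nat \<Rightarrow> nat \<Rightarrow> nat \<Rightarrow> nat) \<Rightarrow> (nat \<Rightarrow> nat \<Rightarrow> nat)
               \<Rightarrow> nat \<Rightarrow> nat \<Rightarrow> nat \<Rightarrow> nat" where
  "Xc a tc tcomp 0 = (\<lambda>i w. if w = 0 then 1 else 0)"
| "Xc a tc tcomp (Suc t) =
     (let X = Xc a tc tcomp t in
      (case a t of
         Comm k l \<Rightarrow> (\<lambda>i w. if i = k \<or> i = l then
                              (if tc t k l \<le> w then X k (w - tc t k l) + X l (w - tc t k l) else 0)
                            else X i w)
       | Comp k \<Rightarrow> (\<lambda>i w. if i = k then
                              (if tcomp t k \<le> w then X k (w - tcomp t k) else 0)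
                            else X i w)))"

end

theory Submission
  imports Defs
begin

instance action :: countable by countable_datatype

lemma X_at_T: "Xc a tc tcomp t i (Tc a tc tcomp t i) \<ge> 1"
proof (induction t arbitrary: i)
  case 0 then show ?case by simp
next
  case (Suc t)
  show ?case
  proof (cases "a t")
    case (Comm k l)
    have hk: "1 \<le> Xc a tc tcomp t k (Tc a tc tcomp t k)" and hl: "1 \<le> Xc a tc tcomp t l (Tc a tc tcomp t l)"
      using Suc by auto
    show ?thesis
    proof (cases "i = k \<or> i = l")
      case True
      then show ?thesis using Comm hk hl
        by (auto simp: Let_def max_def)
    next
      case False
      then show ?thesis using Comm Suc by (auto simp: Let_def)
    qed
  next
    case (Comp k)
    then show ?thesis using Suc by (auto simp: Let_def)
  qed
qed

lemma Xc_meas: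
  assumes A: "\<And>s. A s \<in> measurable M (count_space UNIV)"
    and C: "\<And>s k l. TC s k l \<in> measurable M (count_space UNIV)"
    and L: "\<And>s k. TL s k \<in> measurable M (count_space UNIV)"
  shows "(\<lambda>\<omega>. Xc (\<lambda>s. A s \<omega>) (\<lambda>s k l. TC s k l \<omega>) (\<lambda>s k. TL s k \<omega>) t i w) \<in> measurable M (count_space UNIV)"
proof (induction t arbitrary: i w)
  case 0 then show ?case by simp
next
  case (Suc t)
  let ?X = "\<lambda>i w \<omega>. Xc (\<lambda>s. A s \<omega>) (\<lambda>s k l. TC s k l \<omega>) (\<lambda>s k. TL s k \<omega>) t i w"
  define F where "F = (\<lambda>act \<omega>. case act of
         Comm k l \<Rightarrow> (if i = k \<or> i = l then
                              (if TC t k l \<omega> \<le> w then ?X k (w - TC t k l \<omega>) \<omega> + ?X l (w - TC t k l \<omega>) \<omega> else 0)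
                            else ?X i w \<omega>)
       | Comp k \<Rightarrow> (if i = k then
                              (if TL t k \<omega> \<le> w then ?X k (w - TL t k \<omega>) \<omega> else 0)
                            else ?X i w \<omega>))"
  have eq: "(\<lambda>\<omega>. Xc (\<lambda>s. A s \<omega>) (\<lambda>s k l. TC s k l \<omega>) (\<lambda>s k. TL s k \<omega>) (Suc t) i w) = (\<lambda>\<omega>. F (A t \<omega>) \<omega>)"
    by (rule ext) (simp add: F_def Let_def split: action.split)
  have m1: "(\<lambda>\<omega>. ?X k (g \<omega>) \<omega>) \<in> measurable M (count_space UNIV)"
    if "g \<in> measurable M (count_space UNIV)" for k and g :: "_ \<Rightarrow> nat"
    by (rule measurable_compose_countable[where f="\<lambda>w \<omega>. ?X k w \<omega>", OF Suc that])
  have "(\<lambda>\<omega>. F act \<omega>) \<in> measurable M (count_space UNIV)" for act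
  proof (cases act)
    case (Comm k l)
    have g: "(\<lambda>\<omega>. w - TC t k l \<omega>) \<in> measurable M (count_space UNIV)" by (rule measurable_compose[OF C]) simp
    show ?thesis unfolding Comm F_def using m1[OF g, of k] m1[OF g, of l] C[of t k l] Suc
      by simp
  next
    case (Comp k)
    have g: "(\<lambda>\<omega>. w - TL t k \<omega>) \<in> measurable M (count_space UNIV)" by (rule measurable_compose[OF L]) simp
    show ?thesis unfolding Comp F_def using m1[OF g, of k] L[of t k] Suc
      by simp
  qed
  then show ?case unfolding eq by (rule measurable_compose_countable[OF _ A])
qed

theorem lemma3:
  fixes M :: "'w measure"
    and n :: nat
    and E :: "(nat \<times> nat) set"
    and p :: "nat \<Rightarrow> nat \<Rightarrow> real"
    and pcomp :: "nat \<Rightarrow> real"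
    and a :: "nat \<Rightarrow> 'w \<Rightarrow> action"
    and tauc :: "nat \<Rightarrow> nat \<Rightarrow> nat \<Rightarrow> 'w \<Rightarrow> nat"
    and taul :: "nat \<Rightarrow> nat \<Rightarrow> 'w \<Rightarrow> nat"
    and \<nu> :: real
    and t :: nat
  assumes "prob_space M"
    and "n \<ge> 1"
    and "E \<subseteq> {..<n} \<times> {..<n}"
    and "\<And>s. a s \<in> measurable M (count_space UNIV)"
    and "\<And>s k l. tauc s k l \<in> measurable M (count_space UNIV)"
    and "\<And>s k. taul s k \<in> measurable M (count_space UNIV)"
    and "\<And>s \<omega>. \<omega> \<in> space M \<Longrightarrow>
           a s \<omega> \<in> {Comm i j | i j. (i, j) \<in> E} \<union> {Comp i | i. i < n}"
    and "prob_space.indep_vars M (\<lambda>_. count_space UNIV) a UNIV"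
    and "\<And>s i j. (i, j) \<in> E \<Longrightarrow> measure M {\<omega> \<in> space M. a s \<omega> = Comm i j} = p i j"
    and "\<And>s i. i < n \<Longrightarrow> measure M {\<omega> \<in> space M. a s \<omega> = Comp i} = pcomp i"
    and "\<And>s k l \<omega>. \<omega> \<in> space M \<Longrightarrow> tauc s k l \<omega> > 0"
    and "\<And>s k \<omega>. \<omega> \<in> space M \<Longrightarrow> taul s k \<omega> > 0"
    and "\<nu> > 0"
  shows "emeasure M {\<omega> \<in> space M.
            real (Max ((\<lambda>i. Tc (\<lambda>s. a s \<omega>) (\<lambda>s k l. tauc s k l \<omega>) (\<lambda>s k. taul s k \<omega>) t i) ` {..<n}))
              \<ge> \<nu> * real t}
         \<le> (\<Sum>w. if real w \<ge> \<nu> * real t then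
                    (\<Sum>i<n. \<integral>\<^sup>+ \<omega>. ennreal (real
                        (Xc (\<lambda>s. a s \<omega>) (\<lambda>s k l. tauc s k l \<omega>) (\<lambda>s k. taul s k \<omega>) t i w)) \<partial>M)
                  else 0)"
proof -
  interpret P: prob_space M by fact
  define X where "X = (\<lambda>\<omega> i w. Xc (\<lambda>s. a s \<omega>) (\<lambda>s k l. tauc s k l \<omega>) (\<lambda>s k. taul s k \<omega>) t i w)"
  define T where "T = (\<lambda>\<omega> i. Tc (\<lambda>s. a s \<omega>) (\<lambda>s k l. tauc s k l \<omega>) (\<lambda>s k. taul s k \<omega>) t i)"
  define S where "S = {\<omega> \<in> space M. real (Max (T \<omega> ` {..<n})) \<ge> \<nu> * real t}"
  define g where "g = (\<lambda>w \<omega>. if real w \<ge> \<nu> * real t then (\<Sum>i<n. ennreal (real (X \<omega> i w))) else 0)"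
  have mi: "(\<lambda>\<omega>. ennreal (real (X \<omega> i w))) \<in> borel_measurable M" for i w
    unfolding X_def by (rule measurable_compose[OF Xc_meas[OF assms(4-6)]]) simp
  have mg: "g w \<in> borel_measurable M" for w
    unfolding g_def using mi by simp
  have int_g: "integral\<^sup>N M (g w) = (if real w \<ge> \<nu> * real t then
        (\<Sum>i<n. \<integral>\<^sup>+ \<omega>. ennreal (real (X \<omega> i w)) \<partial>M) else 0)" for w
  proof (cases "real w \<ge> \<nu> * real t")
    case True
    then have "g w = (\<lambda>\<omega>. \<Sum>i<n. ennreal (real (X \<omega> i w)))" unfolding g_def by auto
    then show ?thesis using True by (simp only: nn_integral_sum[OF mi] if_True)
  next
    case False then show ?thesis unfolding g_def by simp
  qed
  have "emeasure M S \<le> integral\<^sup>N M (indicator S)"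
  proof (cases "S \<in> sets M")
    case True then show ?thesis by simp
  next
    case False then show ?thesis by (simp add: emeasure_notin_sets)
  qed
  also have "\<dots> \<le> (\<integral>\<^sup>+ \<omega>. (\<Sum>w. g w \<omega>) \<partial>M)"
  proof (rule nn_integral_mono)
    fix \<omega> assume om: "\<omega> \<in> space M"
    show "indicator S \<omega> \<le> (\<Sum>w. g w \<omega>)"
    proof (cases "\<omega> \<in> S")
      case False then show ?thesis by simp
    next
      case True
      have "n > 0" using assms(2) by simp
      then have "Max (T \<omega> ` {..<n}) \<in> T \<omega> ` {..<n}" by (intro Max_in) auto
      then obtain i0 where i0: "i0 < n" "Max (T \<omega> ` {..<n}) = T \<omega> i0" by auto
      define w0 where "w0 = T \<omega> i0"
      have ge: "real w0 \<ge> \<nu> * real t" using True i0 unfolding S_def w0_def by simp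
      have "1 \<le> X \<omega> i0 w0" unfolding X_def w0_def T_def by (rule X_at_T)
      then have "(1::ennreal) \<le> ennreal (real (X \<omega> i0 w0))" by simp
      also have "\<dots> \<le> (\<Sum>i<n. ennreal (real (X \<omega> i w0)))"
        by (rule member_le_sum) (use i0 in auto)
      also have "\<dots> = g w0 \<omega>" using ge by (simp add: g_def)
      also have "\<dots> \<le> (\<Sum>w. g w \<omega>)"
        using sum_le_suminf[of "\<lambda>w. g w \<omega>" "{w0}"] by (simp add: summableI)
      finally show ?thesis using True by simp
    qed
  qed
  also have "\<dots> = (\<Sum>w. integral\<^sup>N M (g w))"
    by (rule nn_integral_suminf) (use mg in auto)
  finally show ?thesis unfolding int_g S_def T_def X_def .
qed

end
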